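(* For every $n\ge1$, the Houghton group $\mathcal{H}_n$ is not co-Hopfian; that is, there is an injective homomorphism $\mathcal{H}_n\to\mathcal{H}_n$ that is not surjective.
   Context: Let $\mathbb{N}=\{1,2,3,\dots\}$, $\mathbb{Z}_n$ the integers modulo $n$, $R_n=\mathbb{Z}_n\times\mathbb{N}$. The Houghton group $\mathcal{H}_n$ is the group of permutations $\sigma$ of $R_n$ for which there exist $N\ge0$ and integers $t_i$ with $(i,k)\sigma=(i,k+t_i)$ for all $i\in\mathbb{Z}_n$, $k\ge N$ (right actions). A group is co-Hopfian if every injective endomorphism of it is an automorphism. *)

theory Defs
  imports "HOL-Algebra.Group"
begin

text \<open>R_n = Z_n x N, with Z_n represented by {0..<n} and N = {1,2,...}.\<close>
definition Rn :: "nat \<Rightarrow> (nat \<times> nat) set" where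
  "Rn n = {0..<n} \<times> {1..}"

text \<open>Elements of the Houghton group: permutations of R_n (extended by the identity
outside R_n, so that they are determined by their action on R_n) that are eventually
translations on each ray.\<close>
definition houghton_carrier :: "nat \<Rightarrow> (nat \<times> nat \<Rightarrow> nat \<times> nat) set" where
  "houghton_carrier n = {\<sigma>. bij_betw \<sigma> (Rn n) (Rn n) \<and> (\<forall>x. x \<notin> Rn n \<longrightarrow> \<sigma> x = x) \<and>
     (\<exists>N::nat. \<exists>t::nat \<Rightarrow> int. \<forall>i<n. \<forall>k\<ge>N. k \<ge> 1 \<longrightarrow>
        fst (\<sigma> (i, k)) = i \<and> int (snd (\<sigma> (i, k))) = int k + t i)}"

text \<open>Right actions: the product sigma tau means first sigma, then tau.\<close>
definition houghton :: "nat \<Rightarrow> (nat \<times> nat \<Rightarrow> nat \<times> nat) monoid" where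
  "houghton n = \<lparr>carrier = houghton_carrier n, mult = (\<lambda>\<sigma> \<tau>. \<tau> \<circ> \<sigma>), one = id\<rparr>"

end

theory Submission
  imports Defs
begin

definition sh :: "nat \<Rightarrow> (nat \<times> nat \<Rightarrow> nat \<times> nat) \<Rightarrow> (nat \<times> nat \<Rightarrow> nat \<times> nat)" where
  "sh n \<sigma> x = (if x \<in> Rn n \<and> snd x \<ge> 2 then (fst (\<sigma> (fst x, snd x - 1)), snd (\<sigma> (fst x, snd x - 1)) + 1) else x)"

lemma Rn_mem: "(a,b) \<in> Rn n \<longleftrightarrow> a < n \<and> b \<ge> 1"
  by (auto simp: Rn_def)

lemma sh_mem:
  assumes "\<sigma> \<in> houghton_carrier n"
  shows "sh n \<sigma> \<in> houghton_carrier n"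
proof -
  have b: "bij_betw \<sigma> (Rn n) (Rn n)" and ov: "\<forall>x. x \<notin> Rn n \<longrightarrow> \<sigma> x = x"
    and e: "\<exists>N::nat. \<exists>t::nat \<Rightarrow> int. \<forall>i<n. \<forall>k\<ge>N. k \<ge> 1 \<longrightarrow>
        fst (\<sigma> (i, k)) = i \<and> int (snd (\<sigma> (i, k))) = int k + t i"
    using assms unfolding houghton_carrier_def by blast+
  have maps: "\<And>x. x \<in> Rn n \<Longrightarrow> \<sigma> x \<in> Rn n" using b bij_betwE by blast
  have inj: "inj_on \<sigma> (Rn n)" using b by (simp add: bij_betw_def)
  have im: "\<sigma> ` Rn n = Rn n" using b by (simp add: bij_betw_def)
  have m2: "sh n \<sigma> x \<in> Rn n" if "x \<in> Rn n" for x
  proof (cases "snd x \<ge> 2")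
    case True
    then have "(fst x, snd x - 1) \<in> Rn n" using that by (cases x) (auto simp: Rn_mem)
    then have "\<sigma> (fst x, snd x - 1) \<in> Rn n" by (rule maps)
    then show ?thesis using True that
      by (cases "\<sigma> (fst x, snd x - 1)") (auto simp: sh_def Rn_mem)
  qed (use that in \<open>auto simp: sh_def\<close>)
  have injs: "inj_on (sh n \<sigma>) (Rn n)"
  proof (rule inj_onI)
    fix x y assume x: "x \<in> Rn n" and y: "y \<in> Rn n" and eq: "sh n \<sigma> x = sh n \<sigma> y"
    obtain a b where xab: "x = (a,b)" by (cases x)
    obtain c d where ycd: "y = (c,d)" by (cases y)
    show "x = y"
    proof (cases "b \<ge> 2")
      case True note bt = True
      show ?thesis
      proof (cases "d \<ge> 2")
        case True
        have "(a, b-1) \<in> Rn n" "(c, d-1) \<in> Rn n" using x y bt True xab ycd by (auto simp: Rn_mem)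
        moreover have "\<sigma> (a, b-1) = \<sigma> (c, d-1)" using eq bt True x y xab ycd
          by (auto simp: sh_def prod_eq_iff)
        ultimately have "(a, b-1) = (c, d-1)" using inj_onD[OF inj] by metis
        then show ?thesis using bt True xab ycd by auto
      next
        case False
        have "(a, b-1) \<in> Rn n" using x bt xab by (auto simp: Rn_mem)
        then have "\<sigma> (a, b-1) \<in> Rn n" by (rule maps)
        then show ?thesis using eq bt False x y xab ycd
          by (cases "\<sigma> (a, b-1)") (auto simp: sh_def Rn_mem)
      qed
    next
      case False note bf = False
      show ?thesis
      proof (cases "d \<ge> 2")
        case True
        have "(c, d-1) \<in> Rn n" using y True ycd by (auto simp: Rn_mem)
        then have "\<sigma> (c, d-1) \<in> Rn n" by (rule maps)
        then show ?thesis using eq bf True x y xab ycd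
          by (cases "\<sigma> (c, d-1)") (auto simp: sh_def Rn_mem)
      next
        case False
        then show ?thesis using eq bf x y xab ycd by (auto simp: sh_def)
      qed
    qed
  qed
  have surj: "y \<in> sh n \<sigma> ` Rn n" if y: "y \<in> Rn n" for y
  proof -
    obtain c d where ycd: "y = (c,d)" by (cases y)
    show ?thesis
    proof (cases "d \<ge> 2")
      case True
      then have "(c, d-1) \<in> Rn n" using y ycd by (auto simp: Rn_mem)
      then obtain x where x: "x \<in> Rn n" "\<sigma> x = (c, d-1)" using im by (metis imageE)
      obtain a b where xab: "x = (a,b)" by (cases x)
      have "(a, b+1) \<in> Rn n" using x xab by (auto simp: Rn_mem)
      moreover have "sh n \<sigma> (a, b+1) = y" using x xab ycd True calculation
        by (auto simp: sh_def Rn_mem)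
      ultimately show ?thesis by blast
    next
      case False
      then have "sh n \<sigma> y = y" by (auto simp: sh_def ycd)
      then show ?thesis using y by (metis imageI)
    qed
  qed
  have "bij_betw (sh n \<sigma>) (Rn n) (Rn n)"
    unfolding bij_betw_def using injs m2 surj by blast
  moreover have "\<forall>x. x \<notin> Rn n \<longrightarrow> sh n \<sigma> x = x" by (auto simp: sh_def)
  moreover have "\<exists>N::nat. \<exists>t::nat \<Rightarrow> int. \<forall>i<n. \<forall>k\<ge>N. k \<ge> 1 \<longrightarrow>
        fst (sh n \<sigma> (i, k)) = i \<and> int (snd (sh n \<sigma> (i, k))) = int k + t i"
  proof -
    obtain N t where Nt: "\<forall>i<n. \<forall>k\<ge>N. k \<ge> 1 \<longrightarrow>
        fst (\<sigma> (i, k)) = i \<and> int (snd (\<sigma> (i, k))) = int k + t i" using e by blast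
    have "\<forall>i<n. \<forall>k\<ge>N+2. k \<ge> 1 \<longrightarrow>
        fst (sh n \<sigma> (i, k)) = i \<and> int (snd (sh n \<sigma> (i, k))) = int k + t i"
    proof (intro allI impI)
      fix i k assume i: "i < n" and k: "N + 2 \<le> k" and "k \<ge> 1"
      have h: "fst (\<sigma> (i, k-1)) = i \<and> int (snd (\<sigma> (i, k-1))) = int (k-1) + t i"
        using Nt i k by auto
      have "(i,k) \<in> Rn n" using i k by (auto simp: Rn_mem)
      then show "fst (sh n \<sigma> (i, k)) = i \<and> int (snd (sh n \<sigma> (i, k))) = int k + t i"
        using h k by (auto simp: sh_def)
    qed
    then show ?thesis by blast
  qed
  ultimately show ?thesis unfolding houghton_carrier_def by (intro CollectI conjI)
qed

lemma sh_comp: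
  assumes "\<sigma> \<in> houghton_carrier n"
  shows "sh n (\<tau> \<circ> \<sigma>) = sh n \<tau> \<circ> sh n \<sigma>"
proof
  fix x :: "nat \<times> nat"
  have maps: "\<And>x. x \<in> Rn n \<Longrightarrow> \<sigma> x \<in> Rn n"
    using assms bij_betwE by (auto simp: houghton_carrier_def)
  obtain a b where xab: "x = (a,b)" by (cases x)
  show "sh n (\<tau> \<circ> \<sigma>) x = (sh n \<tau> \<circ> sh n \<sigma>) x"
  proof (cases "x \<in> Rn n \<and> b \<ge> 2")
    case True
    then have "(a, b-1) \<in> Rn n" using xab by (auto simp: Rn_mem)
    then have "\<sigma> (a, b-1) \<in> Rn n" by (rule maps)
    then show ?thesis using True xab
      by (cases "\<sigma> (a, b-1)") (auto simp: sh_def Rn_mem)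
  next
    case False
    then show ?thesis using xab by (auto simp: sh_def)
  qed
qed

lemma sh_inj:
  assumes "\<sigma> \<in> houghton_carrier n" "\<tau> \<in> houghton_carrier n" "sh n \<sigma> = sh n \<tau>"
  shows "\<sigma> = \<tau>"
proof
  fix x :: "nat \<times> nat"
  obtain a b where xab: "x = (a,b)" by (cases x)
  show "\<sigma> x = \<tau> x"
  proof (cases "x \<in> Rn n")
    case True
    then have "(a, b+1) \<in> Rn n" using xab by (auto simp: Rn_mem)
    then have "sh n \<sigma> (a,b+1) = sh n \<tau> (a,b+1)" using assms(3) by simp
    moreover have "b \<ge> 1" using True xab by (simp add: Rn_mem)
    ultimately have "\<sigma> (a,b) = \<tau> (a,b)" using \<open>(a, b+1) \<in> Rn n\<close>
      by (simp add: sh_def prod_eq_iff)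
    then show ?thesis using xab by simp
  next
    case False
    have "\<sigma> x = x" "\<tau> x = x" using assms(1,2) False unfolding houghton_carrier_def by blast+
    then show ?thesis by simp
  qed
qed

theorem mainTheorem10:
  fixes n :: nat
  assumes "n \<ge> 1"
  shows "\<exists>\<phi>. \<phi> \<in> hom (houghton n) (houghton n) \<and> inj_on \<phi> (carrier (houghton n)) \<and>
           \<phi> ` carrier (houghton n) \<noteq> carrier (houghton n)"
proof (intro exI conjI)
  show "sh n \<in> hom (houghton n) (houghton n)"
  proof (rule homI)
    fix x assume "x \<in> carrier (houghton n)"
    then show "sh n x \<in> carrier (houghton n)" using sh_mem by (simp add: houghton_def)
  next
    fix x y assume "x \<in> carrier (houghton n)" "y \<in> carrier (houghton n)"
    then show "sh n (x \<otimes>\<^bsub>houghton n\<^esub> y) = sh n x \<otimes>\<^bsub>houghton n\<^esub> sh n y"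
      using sh_comp by (simp add: houghton_def)
  qed
  show "inj_on (sh n) (carrier (houghton n))"
    by (rule inj_onI) (simp add: houghton_def sh_inj)
  define s :: "nat \<times> nat \<Rightarrow> nat \<times> nat" where
    "s = (\<lambda>x. if x = (0,1) then (0,2) else if x = (0,2) then (0,1) else x)"
  have R1: "(0,1) \<in> Rn n" "(0,2) \<in> Rn n" using assms by (auto simp: Rn_mem)
  have ss: "\<And>x. s (s x) = x" by (auto simp: s_def)
  have sR: "\<And>x. x \<in> Rn n \<Longrightarrow> s x \<in> Rn n" using R1 by (auto simp: s_def)
  have "s \<in> houghton_carrier n"
  proof -
    have "bij_betw s (Rn n) (Rn n)"
      by (rule bij_betw_byWitness[where f'=s]) (use ss sR in auto)
    moreover have "\<forall>x. x \<notin> Rn n \<longrightarrow> s x = x" using R1 by (auto simp: s_def)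
    moreover have "\<forall>i<n. \<forall>k\<ge>3. k \<ge> 1 \<longrightarrow>
        fst (s (i, k)) = i \<and> int (snd (s (i, k))) = int k + (\<lambda>_. 0) i"
      by (auto simp: s_def)
    ultimately show ?thesis unfolding houghton_carrier_def
      by (intro CollectI conjI) (assumption, assumption, rule exI[where x=3], rule exI, assumption)
  qed
  moreover have "s \<notin> sh n ` carrier (houghton n)"
  proof
    assume "s \<in> sh n ` carrier (houghton n)"
    then obtain \<sigma> where "s = sh n \<sigma>" by blast
    then have "s (0,1) = sh n \<sigma> (0,1)" by simp
    also have "sh n \<sigma> (0,1) = (0,1)" by (simp add: sh_def)
    finally have "s (0,1) = (0,1)" .
    then show False by (simp add: s_def)
  qed
  ultimately show "sh n ` carrier (houghton n) \<noteq> carrier (houghton n)"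
    by (metis houghton_def partial_object.select_convs(1))
qed

end
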